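(* Let $f$ be as in the setting below and satisfy condition (i); fix $m\in\mathbb N$, $\bar p\in[0,1]^{g_f^m}$, $\epsilon>0$ and $0<s\le1$. Suppose there are a strictly increasing sequence $(M_k)_{k=1}^\infty$ of natural numbers and $0\le c<1$ such that \[ N^s_\infty\big([0,1)\cap G^{f,m}_{\bar p}(M_k,\epsilon)\big)<\frac{c}{K_f^s}\quad\text{for all }k. \] Then for each cylinder $C\subset[0,1)$ of $f$ there is $K_C$ such that $N^s_\infty\big(C\cap G^{f,m}_{\bar p}(M_k,\epsilon/2)\big)<c|C|^s$ for all $k>K_C$.
   Context: Setting: $f\colon[0,1)\to[0,1)$ and $g_f\ge 2$ is an integer such that $[0,1)$ is partitioned into $g_f$ half-open intervals $[a,b)$, enumerated as $[0],\dots,[g_f-1]$, such that on each of them $f$ is monotone and maps onto $[0,1)$, and $|f(x)-f(y)|\ge |x-y|$ for all $x,y$ in the same interval. For a word $x_1\dots x_n$ over $\{0,\dots,g_f-1\}$ the generation-$n$ cylinder is $C_{x_1\dots x_n}=\{x\in[0,1): f^{i-1}(x)\in[x_i],\ i=1,\dots,n\}$; $[0,1)$ is the generation-$0$ cylinder. It is assumed that $|C_{x_1\dots x_n}|\to 0$ as $n\to\infty$ for every $(x_i)\in\{0,\dots,g_f-1\}^{\mathbb N}$, so each $x\in[0,1)$ has a unique coding sequence $(x_i)_{i\ge1}$ (its $f$-expansion). Condition (i) (bounded distortion): there is $K_f>0$ such that for every cylinder $C_{x_1\dots x_n}$ (including $[0,1)$), $|(f^n)'(y)|/|(f^n)'(z)|<K_f$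 for all $y,z\in C_{x_1\dots x_n}$. Frequencies: enumerate the words of length $m$ as $w_1,\dots,w_{g_f^m}$; for $n>m$, $\tau^f_w(x,n)=\#\{i\in\{1,\dots,n-m\}: x_i\dots x_{i+m-1}=w\}$, and $G^{f,m}_{\bar p}(n,\epsilon)=\{x\in[0,1): p_{w_j}-\epsilon<\tau^f_{w_j}(x,n)/(n-m)<p_{w_j}+\epsilon\ \forall j\}$ (a union of generation-$n$ cylinders). $N^s_\infty(F)=\inf\{\sum_i |C_i|^s: F\subset\bigcup_i C_i\}$, the infimum over countable covers by cylinders of $f$. *)

theory Defs
  imports "HOL-Analysis.Analysis"
begin

text \<open>The partition intervals are [i] = {a i ..< b i}, for i < g.
  Words over {0,...,g-1} are lists of naturals whose entries are < g.\<close>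

definition word :: "nat \<Rightarrow> nat list \<Rightarrow> bool" where
  "word g w \<longleftrightarrow> (\<forall>i\<in>set w. i < g)"

definition cyl :: "(real \<Rightarrow> real) \<Rightarrow> (nat \<Rightarrow> real) \<Rightarrow> (nat \<Rightarrow> real) \<Rightarrow> nat list \<Rightarrow> real set" where
  "cyl f a b w = {x \<in> {0..<1}. \<forall>i<length w. (f ^^ i) x \<in> {a (w ! i)..<b (w ! i)}}"

text \<open>Length of a cylinder (cylinders are intervals).\<close>
definition clen :: "real set \<Rightarrow> real" where
  "clen C = diameter C"

definition fexp_setting :: "(real \<Rightarrow> real) \<Rightarrow> nat \<Rightarrow> (nat \<Rightarrow> real) \<Rightarrow> (nat \<Rightarrow> real) \<Rightarrow> bool" where
  "fexp_setting f g a b \<longleftrightarrow>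
     g \<ge> 2 \<and>
     f ` {0..<1} \<subseteq> {0..<1} \<and>
     (\<forall>i<g. a i < b i) \<and>
     (\<forall>i<g. \<forall>j<g. i \<noteq> j \<longrightarrow> {a i..<b i} \<inter> {a j..<b j} = {}) \<and>
     (\<Union>i<g. {a i..<b i}) = {0..<1} \<and>
     (\<forall>i<g. mono_on {a i..<b i} f \<or> antimono_on {a i..<b i} f) \<and>
     (\<forall>i<g. f ` {a i..<b i} = {0..<1}) \<and>
     (\<forall>i<g. \<forall>x\<in>{a i..<b i}. \<forall>y\<in>{a i..<b i}. \<bar>f x - f y\<bar> \<ge> \<bar>x - y\<bar>) \<and>
     (\<forall>xs :: nat \<Rightarrow> nat. (\<forall>i. xs i < g) \<longrightarrow>
        (\<lambda>n. clen (cyl f a b (map xs [0..<n]))) \<longlonglongrightarrow> 0)"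

definition bounded_distortion :: "(real \<Rightarrow> real) \<Rightarrow> nat \<Rightarrow> (nat \<Rightarrow> real) \<Rightarrow> (nat \<Rightarrow> real) \<Rightarrow> real \<Rightarrow> bool" where
  "bounded_distortion f g a b K \<longleftrightarrow> K > 0 \<and>
     (\<forall>w. word g w \<longrightarrow>
        (\<exists>D :: real \<Rightarrow> real.
           (\<forall>y\<in>cyl f a b w. ((f ^^ length w) has_real_derivative D y) (at y within cyl f a b w)) \<and>
           (\<forall>y\<in>cyl f a b w. \<forall>z\<in>cyl f a b w. \<bar>D y\<bar> / \<bar>D z\<bar> < K)))"

text \<open>The i-th digit (0-indexed) of the f-expansion of x: x_{i+1} in the paper.\<close>
definition digit :: "(real \<Rightarrow> real) \<Rightarrow> nat \<Rightarrow> (nat \<Rightarrow> real) \<Rightarrow> (nat \<Rightarrow> real) \<Rightarrow> real \<Rightarrow> nat \<Rightarrow> nat" where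
  "digit f g a b x i = (THE j. j < g \<and> (f ^^ i) x \<in> {a j..<b j})"

definition tau :: "(real \<Rightarrow> real) \<Rightarrow> nat \<Rightarrow> (nat \<Rightarrow> real) \<Rightarrow> (nat \<Rightarrow> real) \<Rightarrow> nat list \<Rightarrow> real \<Rightarrow> nat \<Rightarrow> nat" where
  "tau f g a b w x n =
     card {i. i < n - length w \<and> map (\<lambda>k. digit f g a b x (i + k)) [0..<length w] = w}"

definition Gset :: "(real \<Rightarrow> real) \<Rightarrow> nat \<Rightarrow> (nat \<Rightarrow> real) \<Rightarrow> (nat \<Rightarrow> real) \<Rightarrow> nat \<Rightarrow> (nat list \<Rightarrow> real) \<Rightarrow> nat \<Rightarrow> real \<Rightarrow> real set" where
  "Gset f g a b m p n eps = {x \<in> {0..<1}. \<forall>w. word g w \<and> length w = m \<longrightarrow>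
      p w - eps < real (tau f g a b w x n) / real (n - m) \<and>
      real (tau f g a b w x n) / real (n - m) < p w + eps}"

text \<open>A countable family of cylinders is given by a set of words (every set of words is countable;
  distinct words give distinct cylinders).\<close>
definition Ninf :: "(real \<Rightarrow> real) \<Rightarrow> nat \<Rightarrow> (nat \<Rightarrow> real) \<Rightarrow> (nat \<Rightarrow> real) \<Rightarrow> real \<Rightarrow> real set \<Rightarrow> ennreal" where
  "Ninf f g a b s F = (INF W \<in> {W. (\<forall>w\<in>W. word g w) \<and> F \<subseteq> (\<Union>w\<in>W. cyl f a b w)}.
      infsum (\<lambda>w. ennreal (clen (cyl f a b w) powr s)) W)"

end

theory Submission
  imports Defs
begin


lemma funpow_01:
  fixes f :: "real \<Rightarrow> real" and x :: real
  assumes "f ` {0..<1} \<subseteq> {0..<1}" "x \<in> {0..<1}"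
  shows "(f ^^ n) x \<in> {0..<1}"
proof (induction n)
  case 0 then show ?case using assms by simp
next
  case (Suc n)
  hence "f ((f ^^ n) x) \<in> f ` {0..<1}" by blast
  thus ?case using assms(1) by auto
qed

lemma cyl_sub: "cyl f a b w \<subseteq> {0..<1}"
  unfolding cyl_def by auto

lemma cyl_append:
  assumes "f ` {0..<1} \<subseteq> {0..<1::real}"
  shows "cyl f a b (w @ v) = {x \<in> cyl f a b w. (f ^^ length w) x \<in> cyl f a b v}"
proof (intro set_eqI iffI)
  fix x assume x: "x \<in> cyl f a b (w @ v)"
  hence x01: "x \<in> {0..<1}" and H: "\<forall>i<length w + length v. (f ^^ i) x \<in> {a ((w@v) ! i)..<b ((w@v) ! i)}"
    unfolding cyl_def by auto
  have "x \<in> cyl f a b w" unfolding cyl_def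
  proof (intro CollectI conjI allI impI)
    show "x \<in> {0..<1}" using x01 .
    fix i assume i: "i < length w"
    hence "(f ^^ i) x \<in> {a ((w@v) ! i)..<b ((w@v) ! i)}" using H by simp
    thus "(f ^^ i) x \<in> {a (w ! i)..<b (w ! i)}" using i by (simp add: nth_append)
  qed
  moreover have "(f ^^ length w) x \<in> cyl f a b v"
    unfolding cyl_def
  proof (intro CollectI conjI allI impI)
    show "(f ^^ length w) x \<in> {0..<1}" using funpow_01[OF assms x01] .
    fix i assume "i < length v"
    hence "(f ^^ (i + length w)) x \<in> {a ((w@v) ! (i + length w))..<b ((w@v) ! (i + length w))}"
      using H by auto
    thus "(f ^^ i) ((f ^^ length w) x) \<in> {a (v ! i)..<b (v ! i)}"
      by (simp add: funpow_add nth_append)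
  qed
  ultimately show "x \<in> {x \<in> cyl f a b w. (f ^^ length w) x \<in> cyl f a b v}" by simp
next
  fix x assume "x \<in> {x \<in> cyl f a b w. (f ^^ length w) x \<in> cyl f a b v}"
  hence A: "x \<in> {0..<1}" "\<forall>i<length w. (f ^^ i) x \<in> {a (w ! i)..<b (w ! i)}"
    and B: "\<forall>i<length v. (f ^^ i) ((f ^^ length w) x) \<in> {a (v ! i)..<b (v ! i)}"
    unfolding cyl_def by auto
  show "x \<in> cyl f a b (w @ v)" unfolding cyl_def
  proof (intro CollectI conjI allI impI)
    show "x \<in> {0..<1}" using A by simp
    fix i assume i: "i < length (w @ v)"
    show "(f ^^ i) x \<in> {a ((w @ v) ! i)..<b ((w @ v) ! i)}"
    proof (cases "i < length w")
      case True thus ?thesis using A by (simp add: nth_append)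
    next
      case False
      then obtain j where j: "i = j + length w" "j < length v" using i
        by (metis add.commute le_add_diff_inverse length_append nat_add_left_cancel_less not_less)
      thus ?thesis using B by (simp add: funpow_add nth_append)
    qed
  qed
qed

lemma setting_facts:
  assumes "fexp_setting f g a b"
  shows "f ` {0..<1} \<subseteq> {0..<1}" "\<And>i. i < g \<Longrightarrow> {a i..<b i} \<subseteq> {0..<1}"
    "\<And>i. i < g \<Longrightarrow> a i < b i"
    "\<And>i. i < g \<Longrightarrow> mono_on {a i..<b i} f \<or> antimono_on {a i..<b i} f"
    "\<And>i. i < g \<Longrightarrow> f ` {a i..<b i} = {0..<1}"
    "\<And>i x y. i < g \<Longrightarrow> x \<in> {a i..<b i} \<Longrightarrow> y \<in> {a i..<b i} \<Longrightarrow> \<bar>f x - f y\<bar> \<ge> \<bar>x - y\<bar>"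
  using assms unfolding fexp_setting_def by blast+

lemma cyl_Cons:
  assumes "fexp_setting f g a b" "i < g"
  shows "cyl f a b (i # v) = {x \<in> {a i..<b i}. f x \<in> cyl f a b v}"
proof -
  have e: "cyl f a b [i] = {a i..<b i}"
    using setting_facts(2)[OF assms] unfolding cyl_def by auto
  show ?thesis
    using cyl_append[OF setting_facts(1)[OF assms(1)], of a b "[i]" v] by (simp add: e)
qed

lemma cyl_onto:
  assumes "fexp_setting f g a b" "word g w"
  shows "(f ^^ length w) ` cyl f a b w = {0..<1}"
  using assms(2)
proof (induction w)
  case Nil thus ?case by (auto simp: cyl_def)
next
  case (Cons i v)
  have i: "i < g" and v: "word g v" using Cons.prems by (auto simp: word_def)
  have "(f ^^ length (i # v)) ` cyl f a b (i # v) = (f ^^ length v) ` (f ` cyl f a b (i # v))"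
    by (simp del: funpow.simps add: funpow_Suc_right image_comp)
  also have "f ` cyl f a b (i # v) = cyl f a b v"
  proof
    show "f ` cyl f a b (i # v) \<subseteq> cyl f a b v" using cyl_Cons[OF assms(1) i] by auto
    show "cyl f a b v \<subseteq> f ` cyl f a b (i # v)"
    proof
      fix y assume y: "y \<in> cyl f a b v"
      hence "y \<in> f ` {a i..<b i}" using setting_facts(5)[OF assms(1) i] cyl_sub by blast
      then obtain x where "x \<in> {a i..<b i}" "y = f x" by auto
      thus "y \<in> f ` cyl f a b (i # v)" using cyl_Cons[OF assms(1) i] y by auto
    qed
  qed
  finally show ?case using Cons.IH[OF v] by simp
qed

lemma cyl_convex:
  assumes "fexp_setting f g a b" "word g w" "x \<in> cyl f a b w" "y \<in> cyl f a b w" "x \<le> z" "z \<le> y"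
  shows "z \<in> cyl f a b w"
  using assms(2-6)
proof (induction w arbitrary: x y z)
  case Nil thus ?case by (auto simp: cyl_def)
next
  case (Cons i v)
  have i: "i < g" and v: "word g v" using Cons.prems(1) by (auto simp: word_def)
  have x: "x \<in> {a i..<b i}" "f x \<in> cyl f a b v" using Cons.prems(2) cyl_Cons[OF assms(1) i] by blast+
  have y: "y \<in> {a i..<b i}" "f y \<in> cyl f a b v" using Cons.prems(3) cyl_Cons[OF assms(1) i] by blast+
  have z: "z \<in> {a i..<b i}" using x(1) y(1) Cons.prems(4,5) by auto
  have "f z \<in> cyl f a b v"
    using setting_facts(4)[OF assms(1) i]
  proof
    assume "mono_on {a i..<b i} f"
    hence "f x \<le> f z" "f z \<le> f y" using x(1) y(1) z Cons.prems(4,5) by (auto intro: mono_onD)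
    thus ?thesis using Cons.IH[OF v x(2) y(2)] by blast
  next
    assume "antimono_on {a i..<b i} f"
    hence "f y \<le> f z" "f z \<le> f x" using x(1) y(1) z Cons.prems(4,5) by (auto simp: monotone_on_def)
    thus ?thesis using Cons.IH[OF v y(2) x(2)] by blast
  qed
  thus ?case using z cyl_Cons[OF assms(1) i] by blast
qed

lemma cyl_expand:
  assumes "fexp_setting f g a b" "word g w" "x \<in> cyl f a b w" "y \<in> cyl f a b w"
  shows "\<bar>(f ^^ length w) x - (f ^^ length w) y\<bar> \<ge> \<bar>x - y\<bar>"
  using assms(2-4)
proof (induction w arbitrary: x y)
  case Nil thus ?case by simp
next
  case (Cons i v)
  have i: "i < g" and v: "word g v" using Cons.prems(1) by (auto simp: word_def)
  have x: "x \<in> {a i..<b i}" "f x \<in> cyl f a b v" using Cons.prems(2) cyl_Cons[OF assms(1) i] by blast+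
  have y: "y \<in> {a i..<b i}" "f y \<in> cyl f a b v" using Cons.prems(3) cyl_Cons[OF assms(1) i] by blast+
  have "\<bar>x - y\<bar> \<le> \<bar>f x - f y\<bar>" using setting_facts(6)[OF assms(1) i x(1) y(1)] .
  also have "\<dots> \<le> \<bar>(f ^^ length v) (f x) - (f ^^ length v) (f y)\<bar>"
    using Cons.IH[OF v x(2) y(2)] .
  finally show ?case by (metis funpow_Suc_right comp_apply length_Cons)
qed



lemma cyl_bounded: "bounded (cyl f a b w)"
  using bounded_subset[OF bounded_Ico cyl_sub] by blast

lemma cyl_dist_le: "x \<in> cyl f a b w \<Longrightarrow> y \<in> cyl f a b w \<Longrightarrow> \<bar>x - y\<bar> \<le> clen (cyl f a b w)"
  using diameter_bounded_bound[OF cyl_bounded] unfolding clen_def dist_real_def by blast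

lemma clen_ge0: "0 \<le> clen (cyl f a b w)"
  unfolding clen_def using diameter_ge_0[OF cyl_bounded] .

lemma mvt_cyl:
  assumes set: "fexp_setting f g a b" and w: "word g w"
    and D: "\<forall>y\<in>cyl f a b w. ((f ^^ length w) has_real_derivative D y) (at y within cyl f a b w)"
    and xy: "x \<in> cyl f a b w" "y \<in> cyl f a b w" "x < y"
  shows "\<exists>z\<in>cyl f a b w. (f ^^ length w) y - (f ^^ length w) x = (y - x) * D z"
proof -
  let ?C = "cyl f a b w" and ?h = "f ^^ length w"
  have sub: "{x..y} \<subseteq> ?C" using cyl_convex[OF set w xy(1) xy(2)] by auto
  have cont: "continuous_on ?C ?h" using D by (intro DERIV_continuous_on) auto
  have c2: "continuous_on {x..y} ?h" using continuous_on_subset[OF cont sub] .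
  have dd: "(?h has_real_derivative D t) (at t)" if "x < t" "t < y" for t
  proof -
    have "t \<in> ?C" using sub that by auto
    hence "(?h has_real_derivative D t) (at t within ?C)" using D by blast
    moreover have "at t within ?C = at t"
      by (rule at_within_open_subset[where S="{x<..<y}"]) (use that sub in auto)
    ultimately show ?thesis by simp
  qed
  obtain l z where z: "x < z" "z < y" "DERIV ?h z :> l" "?h y - ?h x = (y - x) * l"
    using MVT[OF xy(3) c2] dd by (meson real_differentiable_def)
  have "l = D z" using DERIV_unique[OF z(3) dd[OF z(1,2)]] .
  moreover have "z \<in> ?C" using sub z by auto
  ultimately show ?thesis using z(4) by blast
qed

lemma tlem:
  fixes d B :: real assumes "0 < d" "0 \<le> B" "B < d"
  shows "0 < (1 + B / d) / 2 \<and> (1 + B / d) / 2 < 1 \<and> B < (1 + B / d) / 2 * d"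
proof -
  have a: "B / d < 1" "0 \<le> B / d" using assms by auto
  have e: "(1 + B / d) / 2 * d = (d + B) / 2" using assms by (simp add: field_simps)
  have 1: "0 < (1 + B / d) / 2" using a(2) by (simp add: field_simps)
  have 2: "(1 + B / d) / 2 < 1" using a(1) by (simp add: field_simps)
  have 3: "B < (1 + B / d) / 2 * d" unfolding e using assms by (simp add: field_simps)
  show ?thesis using 1 2 3 by blast
qed

lemma clen_append:
  assumes set: "fexp_setting f g a b" and K: "bounded_distortion f g a b K" and w: "word g w"
  shows "clen (cyl f a b (w @ v)) \<le> K * clen (cyl f a b w) * clen (cyl f a b v)"
proof -
  let ?C = "cyl f a b w" and ?h = "f ^^ length w"
  let ?B = "K * clen (cyl f a b w) * clen (cyl f a b v)"
  obtain D where D: "\<forall>y\<in>?C. (?h has_real_derivative D y) (at y within ?C)"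
    and Dr: "\<forall>y\<in>?C. \<forall>z\<in>?C. \<bar>D y\<bar> / \<bar>D z\<bar> < K"
    using K w unfolding bounded_distortion_def by blast
  have Kpos: "K > 0" using K unfolding bounded_distortion_def by simp
  have B0: "?B \<ge> 0" using Kpos clen_ge0 by simp
  have app: "cyl f a b (w @ v) = {x \<in> ?C. ?h x \<in> cyl f a b v}"
    using cyl_append[OF setting_facts(1)[OF set]] .
  have onto: "?h ` ?C = {0..<1}" using cyl_onto[OF set w] .
  have key: "y - x \<le> ?B" if xy: "x \<in> cyl f a b (w @ v)" "y \<in> cyl f a b (w @ v)" "x < y" for x y
  proof (rule ccontr)
    assume nle: "\<not> y - x \<le> ?B"
    have xC: "x \<in> ?C" "?h x \<in> cyl f a b v" and yC: "y \<in> ?C" "?h y \<in> cyl f a b v" using xy app by auto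
    obtain \<xi> where \<xi>: "\<xi> \<in> ?C" "?h y - ?h x = (y - x) * D \<xi>"
      using mvt_cyl[OF set w D xC(1) yC(1) xy(3)] by blast
    have exp: "\<bar>?h y - ?h x\<bar> \<ge> \<bar>y - x\<bar>" using cyl_expand[OF set w yC(1) xC(1)] .
    have hv: "\<bar>?h y - ?h x\<bar> \<le> clen (cyl f a b v)" using cyl_dist_le[OF yC(2) xC(2)] .
    have Dxi: "\<bar>D \<xi>\<bar> * (y - x) \<le> clen (cyl f a b v)" using hv \<xi>(2) xy(3)
      by (simp add: abs_mult mult.commute)
    have Dxi0: "D \<xi> \<noteq> 0" using exp \<xi>(2) xy(3) by auto
    define t where "t = (1 + ?B / (y - x)) / 2"
    have t: "0 < t" "t < 1" "t * (y - x) > ?B"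
      using tlem[of "y - x" ?B] nle B0 xy(3) unfolding t_def by auto
    obtain x' where x': "x' \<in> ?C" "?h x' = 0" using onto by (metis atLeastLessThan_iff imageE order_refl zero_less_one)
    obtain y' where y': "y' \<in> ?C" "?h y' = t" using onto t
      by (metis atLeastLessThan_iff imageE less_le)
    have ne: "x' \<noteq> y'" using x' y' t by auto
    obtain \<eta> where \<eta>: "\<eta> \<in> ?C" "\<bar>?h y' - ?h x'\<bar> = \<bar>y' - x'\<bar> * \<bar>D \<eta>\<bar>"
    proof (cases "x' < y'")
      case True
      then obtain \<eta> where "\<eta> \<in> ?C" "?h y' - ?h x' = (y' - x') * D \<eta>"
        using mvt_cyl[OF set w D x'(1) y'(1)] by blast
      thus ?thesis using that by (metis abs_mult)
    next
      case False
      hence "y' < x'" using ne by simp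
      then obtain \<eta> where "\<eta> \<in> ?C" "?h x' - ?h y' = (x' - y') * D \<eta>"
        using mvt_cyl[OF set w D y'(1) x'(1)] by blast
      thus ?thesis using that by (metis abs_minus_commute abs_mult)
    qed
    have teq: "t = \<bar>y' - x'\<bar> * \<bar>D \<eta>\<bar>" using \<eta>(2) x' y' t by simp
    have dw: "\<bar>y' - x'\<bar> \<le> clen ?C" using cyl_dist_le[OF y'(1) x'(1)] .
    have r: "\<bar>D \<eta>\<bar> < K * \<bar>D \<xi>\<bar>" using Dr \<eta>(1) \<xi>(1) Dxi0
      by (metis divide_less_eq zero_less_abs_iff)
    have "t * (y - x) = \<bar>y' - x'\<bar> * \<bar>D \<eta>\<bar> * (y - x)" using teq by simp
    also have "\<dots> \<le> clen ?C * (K * \<bar>D \<xi>\<bar>) * (y - x)"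
      using dw r xy(3) by (intro mult_right_mono mult_mono) auto
    also have "\<dots> = K * clen ?C * (\<bar>D \<xi>\<bar> * (y - x))" by (simp add: algebra_simps)
    also have "\<dots> \<le> ?B" using Dxi Kpos clen_ge0 by (intro mult_left_mono) auto
    finally show False using t(3) by simp
  qed
  have "diameter (cyl f a b (w @ v)) \<le> ?B"
  proof (rule diameter_le)
    show "cyl f a b (w @ v) \<noteq> {} \<or> 0 \<le> ?B" using B0 by simp
    fix x y assume "x \<in> cyl f a b (w @ v)" "y \<in> cyl f a b (w @ v)"
    thus "norm (x - y) \<le> ?B" using key[of x y] key[of y x] B0
      by (cases x y rule: linorder_cases) auto
  qed
  thus ?thesis by (simp add: clen_def)
qed



lemma card_shift_le:
  fixes P :: "nat \<Rightarrow> bool"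
  shows "card {i. i < L \<and> P (i + n)} \<le> card {i. i < L \<and> P i} + n"
    and "card {i. i < L \<and> P i} \<le> card {i. i < L \<and> P (i + n)} + n"
proof -
  let ?A = "{i. i < L \<and> P (i + n)}" and ?B = "{i. i < L \<and> P i}"
  have cA: "card ((\<lambda>i. i + n) ` ?A) = card ?A" by (rule card_image) (auto simp: inj_on_def)
  have s1: "(\<lambda>i. i + n) ` ?A \<subseteq> ?B \<union> {L..<L+n}" by auto
  have "card ((\<lambda>i. i + n) ` ?A) \<le> card (?B \<union> {L..<L+n})" by (rule card_mono[OF _ s1]) auto
  also have "\<dots> \<le> card ?B + card {L..<L+n}" by (rule card_Un_le)
  finally show "card ?A \<le> card ?B + n" using cA by simp
  have s2: "?B \<subseteq> (\<lambda>i. i + n) ` ?A \<union> {..<n}"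
  proof
    fix j assume j: "j \<in> ?B"
    show "j \<in> (\<lambda>i. i + n) ` ?A \<union> {..<n}"
    proof (cases "j < n")
      case False
      hence "j = (j - n) + n" "j - n \<in> ?A" using j by auto
      thus ?thesis by blast
    qed simp
  qed
  have "card ?B \<le> card ((\<lambda>i. i + n) ` ?A \<union> {..<n})" by (rule card_mono[OF _ s2]) auto
  also have "\<dots> \<le> card ((\<lambda>i. i + n) ` ?A) + card {..<n}" by (rule card_Un_le)
  finally show "card ?B \<le> card ?A + n" using cA by simp
qed

lemma tau_shift:
  "\<bar>real (tau f g a b u ((f ^^ n) x) N) - real (tau f g a b u x N)\<bar> \<le> real n"
proof -
  define P where "P j \<longleftrightarrow> map (\<lambda>k. digit f g a b x (j + k)) [0..<length u] = u" for j
  have e1: "tau f g a b u x N = card {i. i < N - length u \<and> P i}"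
    unfolding tau_def P_def by simp
  have dg: "digit f g a b ((f ^^ n) x) j = digit f g a b x (j + n)" for j
    unfolding digit_def by (simp add: funpow_add)
  have e2: "tau f g a b u ((f ^^ n) x) N = card {i. i < N - length u \<and> P (i + n)}"
    unfolding tau_def P_def dg by (simp add: algebra_simps)
  show ?thesis using card_shift_le[of "N - length u" P n] unfolding e1 e2 by linarith
qed

lemma band_lem:
  fixes A B p e :: real
  assumes "\<bar>A - B\<bar> \<le> e / 2" "p - e / 2 < B" "B < p + e / 2"
  shows "p - e < A \<and> A < p + e"
proof -
  have "A - B \<le> e / 2" "- (A - B) \<le> e / 2" using abs_le_D1[OF assms(1)] abs_le_D2[OF assms(1)] by auto
  thus ?thesis using assms(2,3) by auto
qed

lemma freq_shift:
  assumes set: "fexp_setting f g a b"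
    and x: "x \<in> Gset f g a b m p N (eps / 2)"
    and Nm: "N > m" and nb: "real n \<le> eps / 2 * real (N - m)"
  shows "(f ^^ n) x \<in> {0..<1} \<inter> Gset f g a b m p N eps"
proof -
  have x01: "x \<in> {0..<1}" using x unfolding Gset_def by auto
  have h01: "(f ^^ n) x \<in> {0..<1}" using funpow_01[OF setting_facts(1)[OF set] x01] .
  have pos: "real (N - m) > 0" using Nm by simp
  have "p u - eps < real (tau f g a b u ((f ^^ n) x) N) / real (N - m) \<and>
        real (tau f g a b u ((f ^^ n) x) N) / real (N - m) < p u + eps"
    if u: "word g u" "length u = m" for u
  proof -
    let ?t1 = "real (tau f g a b u ((f ^^ n) x) N)" and ?t0 = "real (tau f g a b u x N)"
    have g: "p u - eps / 2 < ?t0 / real (N - m)" "?t0 / real (N - m) < p u + eps / 2"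
      using x u unfolding Gset_def by auto
    have d: "\<bar>?t1 - ?t0\<bar> \<le> real n" using tau_shift .
    have "\<bar>?t1 / real (N - m) - ?t0 / real (N - m)\<bar> = \<bar>?t1 - ?t0\<bar> / real (N - m)"
      using pos by (simp add: diff_divide_distrib[symmetric])
    also have "\<dots> \<le> real n / real (N - m)" using d pos by (simp add: divide_right_mono)
    also have "\<dots> \<le> eps / 2" using nb pos by (simp add: divide_le_eq)
    finally have "\<bar>?t1 / real (N - m) - ?t0 / real (N - m)\<bar> \<le> eps / 2" .
    thus ?thesis using band_lem g by blast
  qed
  thus ?thesis using h01 unfolding Gset_def by auto
qed

lemma clen_pos:
  assumes set: "fexp_setting f g a b" and w: "word g w"
  shows "clen (cyl f a b w) > 0"
proof -
  have onto: "(f ^^ length w) ` cyl f a b w = {0..<1}" using cyl_onto[OF set w] .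
  obtain x0 where x0: "x0 \<in> cyl f a b w" "(f ^^ length w) x0 = 0"
    using onto by (metis atLeastLessThan_iff imageE order_refl zero_less_one)
  obtain x1 where x1: "x1 \<in> cyl f a b w" "(f ^^ length w) x1 = 1/2"
    using onto by (metis atLeastLessThan_iff imageE field_sum_of_halves half_gt_zero_iff less_add_same_cancel1 less_eq_real_def zero_less_one)
  have "x0 \<noteq> x1" using x0 x1 by auto
  hence "0 < \<bar>x0 - x1\<bar>" by simp
  also have "\<dots> \<le> clen (cyl f a b w)" using cyl_dist_le[OF x0(1) x1(1)] .
  finally show ?thesis .
qed

lemma infsum_cmult_ennreal:
  fixes f :: "'a \<Rightarrow> ennreal"
  assumes "c < top"
  shows "infsum (\<lambda>x. c * f x) A = c * infsum f A"
proof -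
  have "(f has_sum infsum f A) A"
    by (rule has_sum_infsum) (rule nonneg_summable_on_complete; simp)
  hence "((\<lambda>F. sum f F) \<longlongrightarrow> infsum f A) (finite_subsets_at_top A)"
    unfolding has_sum_def .
  hence "((\<lambda>F. c * sum f F) \<longlongrightarrow> c * infsum f A) (finite_subsets_at_top A)"
    by (rule ennreal_tendsto_cmult[OF assms])
  hence "((\<lambda>x. c * f x) has_sum (c * infsum f A)) A"
    unfolding has_sum_def by (simp add: sum_distrib_left)
  thus ?thesis by (rule infsumI)
qed

lemma cover_lemma:
  assumes set: "fexp_setting f g a b" and K: "bounded_distortion f g a b K" and w: "word g w"
    and s: "0 < s"
    and hF: "Ninf f g a b s F < ennreal (c / K powr s)"
    and S: "S \<subseteq> {x \<in> cyl f a b w. (f ^^ length w) x \<in> F}"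
  shows "Ninf f g a b s S < ennreal (c * clen (cyl f a b w) powr s)"
proof -
  let ?cl = "\<lambda>u. ennreal (clen (cyl f a b u) powr s)"
  let ?dw = "clen (cyl f a b w)"
  have Kpos: "K > 0" using K unfolding bounded_distortion_def by simp
  have dwpos: "?dw > 0" using clen_pos[OF set w] .
  obtain W where W: "\<forall>v\<in>W. word g v" "F \<subseteq> (\<Union>v\<in>W. cyl f a b v)"
    and Ws: "infsum ?cl W < ennreal (c / K powr s)"
    using hF unfolding Ninf_def INF_less_iff by blast
  let ?W' = "(\<lambda>v. w @ v) ` W"
  have W'1: "\<forall>u\<in>?W'. word g u" using W(1) w by (auto simp: word_def)
  have W'2: "S \<subseteq> (\<Union>u\<in>?W'. cyl f a b u)"
  proof
    fix x assume "x \<in> S"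
    hence x: "x \<in> cyl f a b w" "(f ^^ length w) x \<in> F" using S by auto
    then obtain v where v: "v \<in> W" "(f ^^ length w) x \<in> cyl f a b v" using W(2) by blast
    hence "x \<in> cyl f a b (w @ v)" using x cyl_append[OF setting_facts(1)[OF set]] by blast
    thus "x \<in> (\<Union>u\<in>?W'. cyl f a b u)" using v by blast
  qed
  have "Ninf f g a b s S \<le> infsum ?cl ?W'"
    unfolding Ninf_def by (rule INF_lower) (use W'1 W'2 in blast)
  also have "\<dots> = infsum (?cl \<circ> (\<lambda>v. w @ v)) W"
    by (rule infsum_reindex) (auto simp: inj_on_def)
  also have "\<dots> \<le> infsum (\<lambda>v. ennreal (K powr s * ?dw powr s) * ?cl v) W"
  proof (rule infsum_mono)
    fix v assume "v \<in> W"
    have "clen (cyl f a b (w @ v)) powr s \<le> (K * ?dw * clen (cyl f a b v)) powr s"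
      using clen_append[OF set K w, of v] clen_ge0 s by (intro powr_mono2) auto
    also have "\<dots> = K powr s * ?dw powr s * clen (cyl f a b v) powr s"
      by (simp add: powr_mult)
    finally show "(?cl \<circ> (\<lambda>v. w @ v)) v \<le> ennreal (K powr s * ?dw powr s) * ?cl v"
      by (simp add: ennreal_mult[symmetric])
  qed (rule nonneg_summable_on_complete; simp)+
  also have "\<dots> = ennreal (K powr s * ?dw powr s) * infsum ?cl W"
    by (rule infsum_cmult_ennreal) simp
  also have "\<dots> < ennreal (K powr s * ?dw powr s) * ennreal (c / K powr s)"
    using Kpos dwpos by (intro ennreal_mult_strict_left_mono Ws) auto
  also have "\<dots> = ennreal (c * ?dw powr s)"
  proof -
    have c0: "c \<ge> 0"
    proof (rule ccontr)
      assume "\<not> c \<ge> 0"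
      hence "c / K powr s \<le> 0" using Kpos by (simp add: divide_nonpos_pos)
      hence "ennreal (c / K powr s) = 0" by (simp add: ennreal_eq_0_iff)
      thus False using Ws by simp
    qed
    have "K powr s * ?dw powr s * (c / K powr s) = c * ?dw powr s" using Kpos by simp
    thus ?thesis using c0 Kpos by (simp add: ennreal_mult[symmetric])
  qed
  finally show ?thesis .
qed



lemma KC_bound:
  fixes eps :: real and n m KC k N :: nat
  assumes eps: "eps > 0" and KC: "KC = m + nat \<lceil>2 * real n / eps\<rceil>" and k: "k > KC" and Mk: "k \<le> N"
  shows "N > m" "real n \<le> eps / 2 * real (N - m)"
proof -
  show Nm: "N > m" using k Mk unfolding KC by linarith
  have r1: "real (nat \<lceil>2 * real n / eps\<rceil>) \<le> real (N - m)" using k Mk unfolding KC by linarith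
  have r2: "2 * real n / eps \<le> real (nat \<lceil>2 * real n / eps\<rceil>)" by (rule real_nat_ceiling_ge)
  have r3: "2 * real n / eps \<le> real (N - m)" using r1 r2 by linarith
  have "eps / 2 * (2 * real n / eps) \<le> eps / 2 * real (N - m)"
    using r3 eps by (intro mult_left_mono) auto
  moreover have "eps / 2 * (2 * real n / eps) = real n" using eps by simp
  ultimately show "real n \<le> eps / 2 * real (N - m)" by simp
qed

lemma main_step:
  assumes setting: "fexp_setting f g a b" and cond_i: "bounded_distortion f g a b K"
    and w: "word g w" and s: "0 < s"
    and hk: "Ninf f g a b s ({0..<1} \<inter> Gset f g a b m p N eps) < ennreal (c / K powr s)"
    and Nm: "N > m" and nb: "real (length w) \<le> eps / 2 * real (N - m)"
  shows "Ninf f g a b s (cyl f a b w \<inter> Gset f g a b m p N (eps / 2))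
             < ennreal (c * clen (cyl f a b w) powr s)"
proof -
  have S: "cyl f a b w \<inter> Gset f g a b m p N (eps / 2) \<subseteq>
        {x \<in> cyl f a b w. (f ^^ length w) x \<in> {0..<1} \<inter> Gset f g a b m p N eps}"
    using freq_shift[OF setting _ Nm nb] by blast
  show ?thesis using cover_lemma[OF setting cond_i w s hk S] .
qed

theorem mainTheorem9:
  fixes f :: "real \<Rightarrow> real" and g :: nat and a b :: "nat \<Rightarrow> real" and K :: real
    and m :: nat and p :: "nat list \<Rightarrow> real" and eps s c :: real and M :: "nat \<Rightarrow> nat"
  assumes setting: "fexp_setting f g a b"
    and cond_i: "bounded_distortion f g a b K"
    and m_pos: "m \<ge> 1"
    and p_range: "\<forall>w. word g w \<and> length w = m \<longrightarrow> 0 \<le> p w \<and> p w \<le> 1"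
    and eps_pos: "eps > 0"
    and s_range: "0 < s" "s \<le> 1"
    and M_mono: "strict_mono M"
    and c_range: "0 \<le> c" "c < 1"
    and hyp: "\<forall>k. Ninf f g a b s ({0..<1} \<inter> Gset f g a b m p (M k) eps) < ennreal (c / K powr s)"
  shows "\<forall>w. word g w \<longrightarrow> (\<exists>KC. \<forall>k>KC.
           Ninf f g a b s (cyl f a b w \<inter> Gset f g a b m p (M k) (eps / 2))
             < ennreal (c * clen (cyl f a b w) powr s))"
proof (intro allI impI)
  fix w assume w: "word g w"
  define KC where "KC = m + nat \<lceil>2 * real (length w) / eps\<rceil>"
  have "\<forall>k>KC. Ninf f g a b s (cyl f a b w \<inter> Gset f g a b m p (M k) (eps / 2))
             < ennreal (c * clen (cyl f a b w) powr s)"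
    using main_step[OF setting cond_i w s_range(1) hyp[rule_format]]
      KC_bound[OF eps_pos KC_def _ seq_suble[OF M_mono]] by blast
  thus "\<exists>KC. \<forall>k>KC. Ninf f g a b s (cyl f a b w \<inter> Gset f g a b m p (M k) (eps / 2))
             < ennreal (c * clen (cyl f a b w) powr s)" by blast
qed

end
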